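(* Suppose $0<p<1$ and $q>0$. Let $(S,I)$ be an endemic equilibrium and $\kappa=d_SS+d_II$ (a positive constant). Then $\frac{\kappa}{d_S}\ge N_*$, where $N_*$ is the unique positive solution of $$\frac{N}{|\Omega|}=N_*+\Big(\frac\beta\gamma\Big)_{\max}^{\frac1{1-p}}N_*^{\frac{q}{1-p}}.$$ Furthermore, if $d_S\ge d_I$, then $\frac{\kappa}{d_S}\le\frac{N}{|\Omega|}$.
   Context: Let $\Omega\subset\mathbb R^n$ be a bounded domain with smooth boundary, $\nu$ the outward unit normal on $\partial\Omega$, and $|\Omega|$ its Lebesgue measure. Let $\beta,\gamma$ be positive Hölder continuous functions on $\bar\Omega$, $N>0$, $q>0$, $0<p<1$, and $d_S,d_I>0$. Consider the system $$d_S\Delta S-\beta S^qI^p+\gamma I=0,\quad d_I\Delta I+\beta S^qI^p-\gamma I=0\ \text{ in }\Omega,\qquad \partial_\nu S=\partial_\nu I=0\ \text{ on }\partial\Omega,\qquad \int_\Omega(S+I)=N.$$ An endemic equilibrium is a nonnegative classical solution $(S,I)$ with $I\not\equiv0$. For continuous $f$ on $\bar\Omega$, $f_{\max}=\max_{\bar\Omega}f$. *)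

theory Defs
  imports "HOL-Analysis.Analysis"
begin

fun dirderiv :: "'a::euclidean_space list \<Rightarrow> ('a \<Rightarrow> real) \<Rightarrow> 'a \<Rightarrow> real" where
  "dirderiv [] f = f"
| "dirderiv (b # bs) f = (\<lambda>x. frechet_derivative (dirderiv bs f) (at x) b)"

definition smooth_on :: "'a::euclidean_space set \<Rightarrow> ('a \<Rightarrow> real) \<Rightarrow> bool" where
  "smooth_on U f \<longleftrightarrow>
     (\<forall>bs. set bs \<subseteq> Basis \<longrightarrow> (\<forall>x\<in>U. dirderiv bs f differentiable (at x)))"

definition grad :: "('a::euclidean_space \<Rightarrow> real) \<Rightarrow> 'a \<Rightarrow> 'a" where
  "grad f x = (\<Sum>b\<in>Basis. frechet_derivative f (at x) b *\<^sub>R b)"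

definition local_defining_fun :: "'a::euclidean_space set \<Rightarrow> 'a \<Rightarrow> 'a set \<Rightarrow> ('a \<Rightarrow> real) \<Rightarrow> bool" where
  "local_defining_fun \<Omega> x U \<phi> \<longleftrightarrow>
     open U \<and> x \<in> U \<and> smooth_on U \<phi> \<and> (\<forall>y\<in>U. grad \<phi> y \<noteq> 0) \<and>
     \<Omega> \<inter> U = {y\<in>U. \<phi> y < 0}"

definition smooth_boundary :: "'a::euclidean_space set \<Rightarrow> bool" where
  "smooth_boundary \<Omega> \<longleftrightarrow> (\<forall>x\<in>frontier \<Omega>. \<exists>U \<phi>. local_defining_fun \<Omega> x U \<phi>)"

definition smooth_bounded_domain :: "'a::euclidean_space set \<Rightarrow> bool" where
  "smooth_bounded_domain \<Omega> \<longleftrightarrow>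
     open \<Omega> \<and> connected \<Omega> \<and> \<Omega> \<noteq> {} \<and> bounded \<Omega> \<and> smooth_boundary \<Omega>"

definition outward_normal :: "'a::euclidean_space set \<Rightarrow> 'a \<Rightarrow> 'a" where
  "outward_normal \<Omega> x =
     (SOME n. \<exists>U \<phi>. local_defining_fun \<Omega> x U \<phi> \<and> n = grad \<phi> x /\<^sub>R norm (grad \<phi> x))"

definition holder_continuous_on :: "'a::euclidean_space set \<Rightarrow> ('a \<Rightarrow> real) \<Rightarrow> bool" where
  "holder_continuous_on A f \<longleftrightarrow>
     (\<exists>\<alpha> C. 0 < \<alpha> \<and> \<alpha> \<le> 1 \<and> (\<forall>x\<in>A. \<forall>y\<in>A. \<bar>f x - f y\<bar> \<le> C * dist x y powr \<alpha>))"

definition C2_on :: "'a::euclidean_space set \<Rightarrow> ('a \<Rightarrow> real) \<Rightarrow> bool" where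
  "C2_on \<Omega> u \<longleftrightarrow>
     (\<forall>x\<in>\<Omega>. u differentiable (at x)) \<and>
     (\<forall>b\<in>Basis. \<forall>x\<in>\<Omega>. dirderiv [b] u differentiable (at x)) \<and>
     (\<forall>b\<in>Basis. \<forall>c\<in>Basis. continuous_on \<Omega> (dirderiv [c, b] u))"

definition C1_closure :: "'a::euclidean_space set \<Rightarrow> ('a \<Rightarrow> real) \<Rightarrow> bool" where
  "C1_closure \<Omega> u \<longleftrightarrow>
     (\<forall>x\<in>closure \<Omega>. u differentiable (at x within closure \<Omega>)) \<and>
     (\<forall>b\<in>Basis. continuous_on (closure \<Omega>)
        (\<lambda>x. frechet_derivative u (at x within closure \<Omega>) b))"

definition laplacian :: "('a::euclidean_space \<Rightarrow> real) \<Rightarrow> 'a \<Rightarrow> real" where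
  "laplacian u x = (\<Sum>b\<in>Basis. dirderiv [b, b] u x)"

definition normal_deriv :: "'a::euclidean_space set \<Rightarrow> ('a \<Rightarrow> real) \<Rightarrow> 'a \<Rightarrow> real" where
  "normal_deriv \<Omega> u x = frechet_derivative u (at x within closure \<Omega>) (outward_normal \<Omega> x)"

definition fmax :: "'a::euclidean_space set \<Rightarrow> ('a \<Rightarrow> real) \<Rightarrow> real" where
  "fmax \<Omega> f = Sup (f ` closure \<Omega>)"

definition endemic_equilibrium ::
  "'a::euclidean_space set \<Rightarrow> real \<Rightarrow> real \<Rightarrow> real \<Rightarrow> real \<Rightarrow> real \<Rightarrow>
   ('a \<Rightarrow> real) \<Rightarrow> ('a \<Rightarrow> real) \<Rightarrow> ('a \<Rightarrow> real) \<Rightarrow> ('a \<Rightarrow> real) \<Rightarrow> bool" where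
  "endemic_equilibrium \<Omega> dS dI N p q \<beta> \<gamma> S I \<longleftrightarrow>
     C2_on \<Omega> S \<and> C2_on \<Omega> I \<and> C1_closure \<Omega> S \<and> C1_closure \<Omega> I \<and>
     (\<forall>x\<in>closure \<Omega>. 0 \<le> S x \<and> 0 \<le> I x) \<and>
     (\<forall>x\<in>\<Omega>. dS * laplacian S x - \<beta> x * S x powr q * I x powr p + \<gamma> x * I x = 0) \<and>
     (\<forall>x\<in>\<Omega>. dI * laplacian I x + \<beta> x * S x powr q * I x powr p - \<gamma> x * I x = 0) \<and>
     (\<forall>x\<in>frontier \<Omega>. normal_deriv \<Omega> S x = 0 \<and> normal_deriv \<Omega> I x = 0) \<and>
     ((\<lambda>x. S x + I x) has_integral N) \<Omega> \<and>
     (\<exists>x\<in>closure \<Omega>. I x \<noteq> 0)"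

end

theory Submission
  imports Defs
begin

definition tw :: "'a::euclidean_space set \<Rightarrow> ('a \<Rightarrow> real) \<Rightarrow> bool" where
  "tw G u \<longleftrightarrow> (\<forall>x\<in>G. u differentiable (at x)) \<and> (\<forall>b\<in>Basis. \<forall>x\<in>G. dirderiv [b] u differentiable (at x))"

lemma dirderiv1: "dirderiv [b] u = (\<lambda>x. frechet_derivative u (at x) b)"
  by simp

lemma dirderiv2: "dirderiv [c, b] u = (\<lambda>x. frechet_derivative (\<lambda>y. frechet_derivative u (at y) b) (at x) c)"
  by simp

lemma tw_subset: "tw G u \<Longrightarrow> H \<subseteq> G \<Longrightarrow> tw H u"
  unfolding tw_def by blast

lemma C2_on_tw: "C2_on G u \<Longrightarrow> tw G u"
  unfolding tw_def C2_on_def by blast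

lemma fd_comb:
  fixes u v :: "'a::euclidean_space \<Rightarrow> real" and a c :: real
  assumes "u differentiable (at x)" "v differentiable (at x)"
  shows "frechet_derivative (\<lambda>y. a * u y + c * v y) (at x) =
     (\<lambda>h. a * frechet_derivative u (at x) h + c * frechet_derivative v (at x) h)"
proof -
  have "((\<lambda>y. a * u y + c * v y) has_derivative
     (\<lambda>h. a * frechet_derivative u (at x) h + c * frechet_derivative v (at x) h)) (at x)"
    using assms unfolding frechet_derivative_works
    by (auto intro!: derivative_eq_intros)
  then show ?thesis by (rule frechet_derivative_at[symmetric])
qed

lemma tw_comb:
  fixes u v :: "'a::euclidean_space \<Rightarrow> real" and a c :: real
  assumes G: "open G" and u: "tw G u" and v: "tw G v"
  shows "tw G (\<lambda>y. a * u y + c * v y)"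
    and "\<And>x. x \<in> G \<Longrightarrow> laplacian (\<lambda>y. a * u y + c * v y) x = a * laplacian u x + c * laplacian v x"
proof -
  have eq: "dirderiv [b] (\<lambda>y. a * u y + c * v y) y = a * dirderiv [b] u y + c * dirderiv [b] v y"
    if "y \<in> G" for b y
    using fd_comb[of u y v a c] u v that unfolding tw_def by simp
  have der: "((dirderiv [b] (\<lambda>y. a * u y + c * v y)) has_derivative
      (\<lambda>h. a * frechet_derivative (dirderiv [b] u) (at x) h + c * frechet_derivative (dirderiv [b] v) (at x) h)) (at x)"
    if "x \<in> G" "b \<in> Basis" for b x
  proof -
    have "((\<lambda>y. a * dirderiv [b] u y + c * dirderiv [b] v y) has_derivative
      (\<lambda>h. a * frechet_derivative (dirderiv [b] u) (at x) h + c * frechet_derivative (dirderiv [b] v) (at x) h)) (at x)"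
      using u v that unfolding tw_def frechet_derivative_works
      by (auto intro!: derivative_eq_intros)
    then show ?thesis
      by (rule has_derivative_transform_within_open[OF _ G \<open>x \<in> G\<close>]) (metis eq)
  qed
  show "tw G (\<lambda>y. a * u y + c * v y)"
    unfolding tw_def
  proof safe
    fix x assume "x \<in> G"
    then show "(\<lambda>y. a * u y + c * v y) differentiable at x"
      using u v unfolding tw_def by (intro differentiable_add differentiable_mult differentiable_const) auto
  next
    fix b :: 'a and x assume "b \<in> Basis" "x \<in> G"
    then show "dirderiv [b] (\<lambda>y. a * u y + c * v y) differentiable at x"
      using der unfolding differentiable_def by blast
  qed
  fix x assume "x \<in> G"
  have "dirderiv [b, b] (\<lambda>y. a * u y + c * v y) x = a * dirderiv [b, b] u x + c * dirderiv [b, b] v x"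
    if "b \<in> Basis" for b
  proof -
    have "frechet_derivative (dirderiv [b] (\<lambda>y. a * u y + c * v y)) (at x) =
      (\<lambda>h. a * frechet_derivative (dirderiv [b] u) (at x) h + c * frechet_derivative (dirderiv [b] v) (at x) h)"
      using der[OF \<open>x \<in> G\<close> that] by (rule frechet_derivative_at[symmetric])
    then show ?thesis by simp
  qed
  then show "laplacian (\<lambda>y. a * u y + c * v y) x = a * laplacian u x + c * laplacian v x"
    unfolding laplacian_def by (simp add: sum.distrib sum_distrib_left)
qed

lemma one_dim_max:
  fixes h k :: "real \<Rightarrow> real"
  assumes d: "\<delta> > 0"
    and hd: "\<And>t. 0 \<le> t \<Longrightarrow> t < \<delta> \<Longrightarrow> (h has_real_derivative k t) (at t)"
    and hmax: "\<And>t. 0 \<le> t \<Longrightarrow> t < \<delta> \<Longrightarrow> h t \<le> h 0"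
    and k0: "k 0 = 0"
    and kd: "(k has_real_derivative c) (at 0)"
  shows "c \<le> 0"
proof (rule ccontr)
  assume "\<not> c \<le> 0"
  then have c: "c > 0" by simp
  have "((\<lambda>t. (k t - k 0) / (t - 0)) \<longlongrightarrow> c) (at 0)"
    using kd by (simp add: has_field_derivative_iff)
  then have "((\<lambda>t. k t / t) \<longlongrightarrow> c) (at_right 0)"
    using k0 by (simp add: filterlim_at_split)
  then have "eventually (\<lambda>t. 0 < k t / t) (at_right 0)"
    using c by (rule order_tendstoD)
  then obtain b where b: "b > 0" "\<And>t. t > 0 \<Longrightarrow> t < b \<Longrightarrow> 0 < k t / t"
    unfolding eventually_at_right_field by auto
  define t1 where "t1 = min b \<delta> / 2"
  have t1: "0 < t1" "t1 < b" "t1 < \<delta>" using b d unfolding t1_def by auto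
  obtain z where z: "0 < z" "z < t1" "h t1 - h 0 = (t1 - 0) * k z"
    using MVT2[of 0 t1 h k] t1 hd by auto
  have "k z / z > 0" using b(2)[of z] z t1 by auto
  then have "k z > 0" using z by (simp add: zero_less_divide_iff)
  then have "h t1 - h 0 > 0" using z t1 by simp
  with hmax[of t1] t1 show False by simp
qed

lemma ray_deriv:
  fixes f :: "'a::euclidean_space \<Rightarrow> real"
  assumes "(f has_derivative f') (at (y + t *\<^sub>R b))"
  shows "((\<lambda>s. f (y + s *\<^sub>R b)) has_real_derivative f' b) (at t)"
proof -
  have l: "linear f'" using assms has_derivative_linear by blast
  have "((\<lambda>s. y + s *\<^sub>R b) has_derivative (\<lambda>s. s *\<^sub>R b)) (at t)"
    by (auto intro!: derivative_eq_intros)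
  from diff_chain_at[OF this, of f f'] assms
  have "((f \<circ> (\<lambda>s. y + s *\<^sub>R b)) has_derivative (f' \<circ> (\<lambda>s. s *\<^sub>R b))) (at t)" by simp
  moreover have "(f' \<circ> (\<lambda>s. s *\<^sub>R b)) = (\<lambda>s. f' b * s)"
    using linear_scale[OF l] by (auto simp: fun_eq_iff)
  ultimately show ?thesis
    unfolding has_field_derivative_def by (simp add: o_def)
qed

lemma sdt_dir:
  fixes u :: "'a::euclidean_space \<Rightarrow> real"
  assumes G: "open G" and y: "y \<in> G" and ud: "\<forall>x\<in>G. u differentiable (at x)"
    and b: "b \<in> Basis" and gd: "dirderiv [b] u differentiable (at y)"
    and mx: "\<forall>x\<in>G. u x \<le> u y"
  shows "dirderiv [b, b] u y \<le> 0"
proof -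
  obtain \<delta> where d: "\<delta> > 0" "ball y \<delta> \<subseteq> G" using G y open_contains_ball by blast
  have nb: "norm b = 1" using b by simp
  have inG: "y + t *\<^sub>R b \<in> G" if "0 \<le> t" "t < \<delta>" for t
    using that nb d by (intro subsetD[OF d(2)]) (auto simp: dist_norm)
  define g where "g = dirderiv [b] u"
  have gdef: "g x = frechet_derivative u (at x) b" for x unfolding g_def by simp
  have hd: "((\<lambda>s. u (y + s *\<^sub>R b)) has_real_derivative g (y + t *\<^sub>R b)) (at t)"
    if "0 \<le> t" "t < \<delta>" for t
    unfolding gdef
    by (rule ray_deriv) (use ud inG[OF that] frechet_derivative_works in blast)
  have D0: "frechet_derivative u (at y) = (\<lambda>v. 0)"
    by (rule differential_zero_maxmin[OF y G]) (use ud y frechet_derivative_works mx in blast)+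
  have k0: "g (y + 0 *\<^sub>R b) = 0" unfolding gdef using D0 by simp
  have kd: "((\<lambda>s. g (y + s *\<^sub>R b)) has_real_derivative frechet_derivative g (at y) b) (at 0)"
  proof (rule ray_deriv)
    have "(g has_derivative frechet_derivative g (at y)) (at y)"
      using gd unfolding g_def[symmetric] frechet_derivative_works .
    then show "(g has_derivative frechet_derivative g (at y)) (at (y + 0 *\<^sub>R b))" by simp
  qed
  have "frechet_derivative g (at y) b \<le> 0"
    by (rule one_dim_max[OF d(1) hd _ k0 kd]) (use mx inG in auto)
  then show ?thesis unfolding g_def by simp
qed

lemma sdt:
  fixes u :: "'a::euclidean_space \<Rightarrow> real"
  assumes G: "open G" and y: "y \<in> G" and tw: "tw G u"
    and mx: "\<forall>x\<in>G. u x \<le> u y"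
  shows "laplacian u y \<le> 0"
  unfolding laplacian_def
  by (rule sum_nonpos, rule sdt_dir[OF G y]) (use tw y mx in \<open>auto simp: tw_def\<close>)

lemma barrier:
  fixes z :: "'a::euclidean_space" and \<alpha> :: real
  defines "v \<equiv> \<lambda>x. exp (- \<alpha> * ((x - z) \<bullet> (x - z)))"
  shows barrier_deriv: "\<And>x. (v has_derivative (\<lambda>h. - 2 * \<alpha> * v x * ((x - z) \<bullet> h))) (at x)"
    and barrier_tw: "tw UNIV v"
    and barrier_lap: "\<And>x. laplacian v x = v x * (4 * \<alpha>\<^sup>2 * ((x - z) \<bullet> (x - z)) - 2 * \<alpha> * DIM('a))"
proof -
  show d1: "(v has_derivative (\<lambda>h. - 2 * \<alpha> * v x * ((x - z) \<bullet> h))) (at x)" for x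
    unfolding v_def
    apply (rule derivative_eq_intros refl | simp)+
    apply (rule ext)
    apply (subst (2) inner_commute)
    apply (simp add: algebra_simps)
    done
  have p1: "dirderiv [b] v = (\<lambda>x. - 2 * \<alpha> * v x * ((x - z) \<bullet> b))" for b
    using frechet_derivative_at[OF d1] by (auto simp: fun_eq_iff)
  have d2: "((\<lambda>x. - 2 * \<alpha> * v x * ((x - z) \<bullet> b)) has_derivative
     (\<lambda>h. - 2 * \<alpha> * ((- 2 * \<alpha> * v x * ((x - z) \<bullet> h)) * ((x - z) \<bullet> b) + v x * (h \<bullet> b)))) (at x)" for x b
    apply (rule derivative_eq_intros refl d1 | simp)+
    apply (rule ext) apply (simp add: algebra_simps)
    done
  show "tw UNIV v"
    unfolding tw_def differentiable_def
  proof safe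
    fix x show "\<exists>D. (v has_derivative D) (at x)" using d1 by blast
  next
    fix b x :: 'a show "\<exists>D. (dirderiv [b] v has_derivative D) (at x)"
      unfolding p1 using d2 by blast
  qed
  fix x
  have "dirderiv [b, b] v x = v x * (4 * \<alpha>\<^sup>2 * ((x - z) \<bullet> b)\<^sup>2 - 2 * \<alpha>)" if "b \<in> Basis" for b
  proof -
    have "dirderiv [b, b] v x = frechet_derivative (dirderiv [b] v) (at x) b" by simp
    also have "\<dots> = - 2 * \<alpha> * ((- 2 * \<alpha> * v x * ((x - z) \<bullet> b)) * ((x - z) \<bullet> b) + v x * (b \<bullet> b))"
      unfolding p1 using frechet_derivative_at[OF d2, symmetric] by simp
    also have "\<dots> = v x * (4 * \<alpha>\<^sup>2 * ((x - z) \<bullet> b)\<^sup>2 - 2 * \<alpha>)"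
      using that by (simp add: algebra_simps power2_eq_square)
    finally show ?thesis .
  qed
  then have "laplacian v x = (\<Sum>b\<in>Basis. v x * (4 * \<alpha>\<^sup>2 * ((x - z) \<bullet> b)\<^sup>2 - 2 * \<alpha>))"
    unfolding laplacian_def by (rule sum.cong[OF refl])
  also have "\<dots> = v x * (4 * \<alpha>\<^sup>2 * (\<Sum>b\<in>Basis. ((x - z) \<bullet> b)\<^sup>2) - 2 * \<alpha> * DIM('a))"
    by (simp add: sum_distrib_left sum_subtractf algebra_simps)
  also have "(\<Sum>b\<in>Basis. ((x - z) \<bullet> b)\<^sup>2) = (x - z) \<bullet> (x - z)"
    by (subst euclidean_inner[of "x - z" "x - z"]) (simp add: power2_eq_square)
  finally show "laplacian v x = v x * (4 * \<alpha>\<^sup>2 * ((x - z) \<bullet> (x - z)) - 2 * \<alpha> * DIM('a))" .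
qed

lemma one_sided:
  fixes f :: "'a::euclidean_space \<Rightarrow> real"
  assumes fd: "(f has_derivative D) (at y within T)" and d: "\<delta> > 0"
    and inT: "\<And>t. 0 < t \<Longrightarrow> t \<le> \<delta> \<Longrightarrow> y + t *\<^sub>R w \<in> T"
    and le: "\<And>t. 0 < t \<Longrightarrow> t \<le> \<delta> \<Longrightarrow> f (y + t *\<^sub>R w) \<le> f y"
  shows "D w \<le> 0"
proof -
  have l: "linear D" using fd has_derivative_linear by blast
  have g: "((\<lambda>t. y + t *\<^sub>R w) has_derivative (\<lambda>t. t *\<^sub>R w)) (at 0 within {0<..\<delta>})"
    by (auto intro!: derivative_eq_intros)
  have "(\<lambda>t. y + t *\<^sub>R w) ` {0<..\<delta>} \<subseteq> T" using inT by auto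
  then have fd': "(f has_derivative D) (at ((\<lambda>t. y + t *\<^sub>R w) 0) within (\<lambda>t. y + t *\<^sub>R w) ` {0<..\<delta>})"
    using has_derivative_subset[OF fd] by simp
  have "((f \<circ> (\<lambda>t. y + t *\<^sub>R w)) has_derivative (D \<circ> (\<lambda>t. t *\<^sub>R w))) (at 0 within {0<..\<delta>})"
    by (rule diff_chain_within[OF g fd'])
  moreover have "(D \<circ> (\<lambda>t. t *\<^sub>R w)) = (\<lambda>t. D w * t)"
    using linear_scale[OF l] by (auto simp: fun_eq_iff)
  ultimately have "((\<lambda>t. f (y + t *\<^sub>R w)) has_real_derivative D w) (at 0 within {0<..\<delta>})"
    unfolding has_field_derivative_def by (simp add: o_def)
  then have lim: "((\<lambda>t. (f (y + t *\<^sub>R w) - f (y + 0 *\<^sub>R w)) / (t - 0)) \<longlongrightarrow> D w) (at 0 within {0<..\<delta>})"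
    unfolding has_field_derivative_iff .
  show ?thesis
  proof (rule tendsto_upperbound[OF lim])
    show "\<forall>\<^sub>F t in at 0 within {0<..\<delta>}. (f (y + t *\<^sub>R w) - f (y + 0 *\<^sub>R w)) / (t - 0) \<le> 0"
      unfolding eventually_at_filter
      by (intro always_eventually allI impI) (use le in \<open>auto simp: divide_nonpos_pos\<close>)
    show "\<not> trivial_limit (at 0 within {0<..\<delta>})"
      unfolding trivial_limit_within using d by simp
  qed
qed

lemma hopf:
  fixes u :: "'a::euclidean_space \<Rightarrow> real"
  assumes R: "R > 0" and yz: "dist z y = R"
    and cont: "continuous_on (cball z R) u"
    and le: "\<forall>x\<in>cball z R. u x \<le> u y"
    and lt: "\<forall>x\<in>ball z R. u x < u y"
    and tw: "tw (ball z R) u"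
    and lap: "\<forall>x\<in>ball z R. laplacian u x \<ge> 0"
    and Dd: "(u has_derivative D) (at y within cball z R)"
  shows "D (y - z) > 0"
proof -
  have "\<exists>\<delta>>0. \<forall>x\<in>sphere z (R/2). u x \<le> u y - \<delta>"
  proof (cases "sphere z (R/2) = {}")
    case True then show ?thesis by (intro exI[of _ 1]) auto
  next
    case False
    have sub: "sphere z (R/2) \<subseteq> ball z R" using R by auto
    have "continuous_on (sphere z (R/2)) u"
      by (rule continuous_on_subset[OF cont]) (use sub in auto)
    then obtain x1 where x1: "x1 \<in> sphere z (R/2)" "\<forall>x\<in>sphere z (R/2). u x \<le> u x1"
      using continuous_attains_sup[OF compact_sphere False] by blast
    have "u x1 < u y" using lt sub x1(1) by auto
    then show ?thesis using x1 by (intro exI[of _ "u y - u x1"]) auto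
  qed
  then obtain \<delta> where \<delta>: "\<delta> > 0" "\<forall>x\<in>sphere z (R/2). u x \<le> u y - \<delta>" by blast
  define n where "n = real DIM('a)"
  have n: "n \<ge> 1" unfolding n_def by simp
  define \<alpha> where "\<alpha> = (2 * n + 1) / R\<^sup>2"
  have \<alpha>: "\<alpha> > 0" "\<alpha> * R\<^sup>2 = 2 * n + 1" unfolding \<alpha>_def using R n by auto
  define v where "v = (\<lambda>x. exp (- \<alpha> * ((x - z) \<bullet> (x - z))))"
  define \<epsilon> where "\<epsilon> = \<delta> / 2"
  have \<epsilon>: "\<epsilon> > 0" unfolding \<epsilon>_def using \<delta> by simp
  define W where "W = (\<lambda>x. 1 * u x + \<epsilon> * v x)"
  have vd: "(v has_derivative (\<lambda>h. - 2 * \<alpha> * v x * ((x - z) \<bullet> h))) (at x)" for x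
    unfolding v_def by (rule barrier_deriv)
  have vtw: "tw (ball z R) v" unfolding v_def by (rule tw_subset[OF barrier_tw]) auto
  have Wtw: "tw (ball z R) W" unfolding W_def by (rule tw_comb(1)[OF open_ball tw vtw])
  have Wlap: "laplacian W x = laplacian u x + \<epsilon> * (v x * (4 * \<alpha>\<^sup>2 * ((x - z) \<bullet> (x - z)) - 2 * \<alpha> * n))"
    if "x \<in> ball z R" for x
    unfolding W_def tw_comb(2)[OF open_ball tw vtw that] unfolding v_def barrier_lap n_def by simp
  have vpos: "v x > 0" for x unfolding v_def by simp
  have vle1: "v x \<le> 1" for x
  proof -
    have "0 \<le> (x - z) \<bullet> (x - z)" by simp
    then have "- \<alpha> * ((x - z) \<bullet> (x - z)) \<le> 0" using \<alpha> by (simp add: mult_nonneg_nonneg)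
    then show ?thesis unfolding v_def by simp
  qed
  have inner_dist: "(x - z) \<bullet> (x - z) = (dist z x)\<^sup>2" for x
    by (simp add: dot_square_norm dist_norm norm_minus_commute)
  define e0 where "e0 = v y"
  have e0: "e0 = exp (- \<alpha> * R\<^sup>2)" unfolding e0_def v_def inner_dist yz ..
  define Ac where "Ac = cball z R - ball z (R/2)"
  have Acc: "compact Ac" unfolding Ac_def by (intro compact_diff) auto
  have yAc: "y \<in> Ac" unfolding Ac_def using yz R by auto
  have contW: "continuous_on Ac W"
  proof -
    have "continuous_on Ac u" by (rule continuous_on_subset[OF cont]) (auto simp: Ac_def)
    moreover have "continuous_on Ac v" unfolding v_def by (intro continuous_intros)
    ultimately show ?thesis unfolding W_def by (intro continuous_intros)
  qed
  obtain q where q: "q \<in> Ac" "\<forall>x\<in>Ac. W x \<le> W q"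
    using continuous_attains_sup[OF Acc _ contW] yAc by blast
  have Wq: "W q \<le> u y + \<epsilon> * e0"
  proof -
    consider "dist z q = R" | "dist z q = R/2" | "R/2 < dist z q" "dist z q < R"
    proof -
      have dq: "R/2 \<le> dist z q" "dist z q \<le> R" using q(1) unfolding Ac_def by auto
      show ?thesis using that dq by (cases "dist z q = R"; cases "dist z q = R/2") auto
    qed
    then show ?thesis
    proof cases
      case 1
      then have "v q = e0" unfolding e0 v_def inner_dist by simp
      moreover have "u q \<le> u y" using le q(1) unfolding Ac_def by auto
      ultimately show ?thesis unfolding W_def by simp
    next
      case 2
      then have "u q \<le> u y - \<delta>" using \<delta>(2) by (simp add: dist_commute)
      moreover have "\<epsilon> * v q \<le> \<epsilon>" using mult_left_mono[OF vle1[of q], of \<epsilon>] \<epsilon> by simp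
      moreover have "\<epsilon> * e0 > 0" unfolding e0_def using \<epsilon> vpos by simp
      ultimately have "u q + \<epsilon> * v q \<le> u y + \<epsilon> * e0" using \<epsilon>_def \<epsilon> by linarith
      then show ?thesis unfolding W_def by simp
    next
      case 3
      define A where "A = ball z R - cball z (R/2)"
      have A: "open A" "q \<in> A" "A \<subseteq> Ac" "A \<subseteq> ball z R" unfolding A_def Ac_def using 3 by auto
      have "laplacian W q \<le> 0"
        by (rule sdt[OF A(1) A(2)]) (use tw_subset[OF Wtw A(4)] q(2) A(3) in auto)
      moreover have "laplacian W q > 0"
      proof -
        have s: "(q - z) \<bullet> (q - z) > R\<^sup>2 / 4"
        proof -
          have "(R/2)\<^sup>2 < (dist z q)\<^sup>2" by (rule power_strict_mono) (use 3 R in auto)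
          then show ?thesis unfolding inner_dist by (simp add: power_divide)
        qed
        have "4 * \<alpha>\<^sup>2 * ((q - z) \<bullet> (q - z)) > 4 * \<alpha>\<^sup>2 * (R\<^sup>2 / 4)"
          using s \<alpha> by simp
        also have "4 * \<alpha>\<^sup>2 * (R\<^sup>2 / 4) = \<alpha> * (2 * n + 1)"
        proof -
          have "4 * \<alpha>\<^sup>2 * (R\<^sup>2 / 4) = \<alpha> * (\<alpha> * R\<^sup>2)" by (simp add: power2_eq_square)
          then show ?thesis using \<alpha>(2) by simp
        qed
        finally have "4 * \<alpha>\<^sup>2 * ((q - z) \<bullet> (q - z)) - 2 * \<alpha> * n > 0" using \<alpha> by (simp add: algebra_simps)
        then have "\<epsilon> * (v q * (4 * \<alpha>\<^sup>2 * ((q - z) \<bullet> (q - z)) - 2 * \<alpha> * n)) > 0"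
          using \<epsilon> vpos by simp
        then show ?thesis using Wlap[of q] lap A 3 by (simp add: dist_commute) (smt (verit) mem_ball subsetD)
      qed
      ultimately show ?thesis by simp
    qed
  qed
  have Wy: "W y = u y + \<epsilon> * e0" unfolding W_def e0_def by simp
  have WD: "(W has_derivative (\<lambda>h. 1 * D h + \<epsilon> * (- 2 * \<alpha> * v y * ((y - z) \<bullet> h)))) (at y within cball z R)"
  proof -
    have a: "((\<lambda>x. 1 * u x) has_derivative (\<lambda>h. 1 * D h)) (at y within cball z R)" using Dd by simp
    have b: "((\<lambda>x. \<epsilon> * v x) has_derivative (\<lambda>h. \<epsilon> * (- 2 * \<alpha> * v y * ((y - z) \<bullet> h)))) (at y within cball z R)"
      by (rule has_derivative_mult_right[OF has_derivative_at_withinI[OF vd]])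
    show ?thesis unfolding W_def by (rule has_derivative_add[OF a b])
  qed
  have "1 * D (z - y) + \<epsilon> * (- 2 * \<alpha> * v y * ((y - z) \<bullet> (z - y))) \<le> 0"
  proof (rule one_sided[OF WD, of "1/2"])
    fix t :: real assume t: "0 < t" "t \<le> 1/2"
    have "dist z (y + t *\<^sub>R (z - y)) = (1 - t) * R"
    proof -
      have "z - (y + t *\<^sub>R (z - y)) = (1 - t) *\<^sub>R (z - y)" by (simp add: algebra_simps)
      then show ?thesis using t yz by (simp add: dist_norm)
    qed
    moreover have "(1 - t) * R \<le> R" "(1 - t) * R \<ge> R / 2"
    proof -
      have tR: "t * R \<le> (1/2) * R" "0 \<le> t * R" using t R by (auto intro!: mult_right_mono)
      have "(1 - t) * R = R - t * R" by (simp add: algebra_simps)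
      then show "(1 - t) * R \<le> R" "(1 - t) * R \<ge> R / 2" using tR by linarith+
    qed
    ultimately have "y + t *\<^sub>R (z - y) \<in> Ac" unfolding Ac_def by auto
    then show "y + t *\<^sub>R (z - y) \<in> cball z R" "W (y + t *\<^sub>R (z - y)) \<le> W y"
      using q(2) Wq Wy unfolding Ac_def by (auto intro: order.trans)
  qed (simp)
  moreover have "(y - z) \<bullet> (z - y) = - R\<^sup>2"
  proof -
    have "(y - z) \<bullet> (z - y) = - ((y - z) \<bullet> (y - z))"
      by (metis inner_minus_right minus_diff_eq)
    then show ?thesis using inner_dist[of y] yz by (simp add: algebra_simps)
  qed
  ultimately have "D (z - y) + \<epsilon> * (2 * \<alpha> * v y * R\<^sup>2) \<le> 0" by simp
  moreover have "\<epsilon> * (2 * \<alpha> * v y * R\<^sup>2) > 0" using \<epsilon> \<alpha> vpos R by simp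
  ultimately have "D (z - y) < 0" by linarith
  moreover have "D (z - y) = - D (y - z)"
    using linear_neg[OF has_derivative_linear[OF Dd], of "y - z"] by simp
  ultimately show ?thesis by simp
qed

lemma smp:
  fixes u :: "'a::euclidean_space \<Rightarrow> real"
  assumes G: "open G" and conn: "connected G" and tw: "tw G u" and cont: "continuous_on G u"
    and lap: "\<forall>x\<in>G. laplacian u x \<ge> 0" and le: "\<forall>x\<in>G. u x \<le> M"
    and x1: "x1 \<in> G" "u x1 = M"
  shows "\<forall>x\<in>G. u x = M"
proof -
  define E where "E = {x\<in>G. u x = M}"
  have oE: "open E"
    unfolding open_contains_ball
  proof
    fix x assume "x \<in> E"
    then have x: "x \<in> G" "u x = M" unfolding E_def by auto
    obtain r where r: "r > 0" "cball x r \<subseteq> G" using G x(1) open_contains_cball by blast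
    have "ball x (r/2) \<subseteq> E"
    proof
      fix p assume p: "p \<in> ball x (r/2)"
      have pG: "p \<in> G" using p r by auto
      show "p \<in> E"
      proof (rule ccontr)
        assume "p \<notin> E"
        then have up: "u p < M" using le pG unfolding E_def by force
        define K where "K = {y \<in> cball x r. u y = M}"
        have "closed K" unfolding K_def
          by (rule continuous_closed_preimage_constant) (use continuous_on_subset[OF cont r(2)] in auto)
        moreover have "x \<in> K" using x r unfolding K_def by auto
        then have "K \<noteq> {}" by blast
        ultimately obtain y where y: "y \<in> K" "\<And>w. w \<in> K \<Longrightarrow> dist p y \<le> dist p w"
          using distance_attains_inf by blast
        define \<rho> where "\<rho> = dist p y"
        have "y \<noteq> p" using y(1) up unfolding K_def by auto
        then have \<rho>: "\<rho> > 0" unfolding \<rho>_def by simp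
        have "\<rho> \<le> dist p x" unfolding \<rho>_def using y(2)[of x] x r unfolding K_def by auto
        then have \<rho>r: "\<rho> < r/2" using p by (simp add: dist_commute)
        have sub: "cball p \<rho> \<subseteq> ball x r"
        proof
          fix q assume "q \<in> cball p \<rho>"
          then have "dist x q \<le> dist x p + dist p q" "dist p q \<le> \<rho>" "dist x p < r/2"
            using dist_triangle p by auto
          then show "q \<in> ball x r" using \<rho>r by simp
        qed
        have subG: "cball p \<rho> \<subseteq> G" using sub r(2) ball_subset_cball by blast
        have yG: "y \<in> G" and uy: "u y = M" using y(1) r unfolding K_def by auto
        have ud: "u differentiable (at y)" using tw yG unfolding tw_def by auto
        then have Dd: "(u has_derivative frechet_derivative u (at y)) (at y)"
          using frechet_derivative_works by blast
        have "frechet_derivative u (at y) (y - p) > 0"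
        proof (rule hopf[OF \<rho>])
          show "dist p y = \<rho>" unfolding \<rho>_def ..
          show "continuous_on (cball p \<rho>) u"
            by (rule continuous_on_subset[OF cont subG])
          show "\<forall>w\<in>cball p \<rho>. u w \<le> u y" using subG le uy by auto
          show "\<forall>w\<in>ball p \<rho>. u w < u y"
          proof
            fix w assume w: "w \<in> ball p \<rho>"
            have "w \<in> G" using w subG by auto
            moreover have "u w \<noteq> M"
            proof
              assume "u w = M"
              then have "w \<in> K" using w sub unfolding K_def by (auto simp: subset_iff) (meson less_imp_le)
              then have "dist p y \<le> dist p w" by (rule y(2))
              then show False using w unfolding \<rho>_def by simp
            qed
            ultimately show "u w < u y" using le uy by force
          qed
          show "tw (ball p \<rho>) u" by (rule tw_subset[OF tw]) (use subG in auto)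
          show "\<forall>w\<in>ball p \<rho>. 0 \<le> laplacian u w" using lap subG by (auto simp: subset_iff)
          show "(u has_derivative frechet_derivative u (at y)) (at y within cball p \<rho>)"
            using Dd by (rule has_derivative_at_withinI)
        qed
        moreover have "frechet_derivative u (at y) = (\<lambda>v. 0)"
          by (rule differential_zero_maxmin[OF yG G Dd]) (use le uy in auto)
        ultimately show False by simp
      qed
    qed
    then show "\<exists>e>0. ball x e \<subseteq> E" using r by (intro exI[of _ "r/2"]) auto
  qed
  define V where "V = G \<inter> u -` {..<M}"
  have oV: "open V" unfolding V_def by (rule continuous_open_preimage[OF cont G]) auto
  have "E \<inter> G = {} \<or> V \<inter> G = {}"
    by (rule connectedD[OF conn oE oV]) (use le in \<open>auto simp: E_def V_def\<close>)
  moreover have "x1 \<in> E \<inter> G" using x1 unfolding E_def by auto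
  ultimately have "V \<inter> G = {}" by auto
  then show ?thesis using le unfolding V_def by force
qed

lemma lin_expand:
  fixes f :: "'a::euclidean_space \<Rightarrow> real"
  assumes l: "linear f"
  shows "f h = (\<Sum>c\<in>Basis. (h \<bullet> c) * f c)"
proof -
  have "f h = f (\<Sum>c\<in>Basis. (h \<bullet> c) *\<^sub>R c)" by (simp add: euclidean_representation)
  also have "\<dots> = (\<Sum>c\<in>Basis. (h \<bullet> c) * f c)"
    by (simp add: linear_sum[OF l] linear_scale[OF l] o_def)
  finally show ?thesis .
qed

lemma lin_bound:
  fixes f :: "'a::euclidean_space \<Rightarrow> real"
  assumes l: "linear f"
  shows "\<bar>f h\<bar> \<le> (\<Sum>c\<in>Basis. \<bar>f c\<bar>) * norm h"
proof -
  have "\<bar>f h\<bar> = \<bar>\<Sum>c\<in>Basis. (h \<bullet> c) * f c\<bar>" by (subst lin_expand[OF l, of h]) (rule refl)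
  also have "\<dots> \<le> (\<Sum>c\<in>Basis. \<bar>(h \<bullet> c) * f c\<bar>)" by (rule sum_abs)
  also have "\<dots> \<le> (\<Sum>c\<in>Basis. norm h * \<bar>f c\<bar>)"
    by (rule sum_mono) (simp add: abs_mult mult_right_mono Basis_le_norm)
  also have "\<dots> = (\<Sum>c\<in>Basis. \<bar>f c\<bar>) * norm h" by (simp add: sum_distrib_left mult.commute)
  finally show ?thesis .
qed

lemma grad_inner:
  fixes \<phi> :: "'a::euclidean_space \<Rightarrow> real"
  assumes l: "linear (frechet_derivative \<phi> (at x))"
  shows "grad \<phi> x \<bullet> h = frechet_derivative \<phi> (at x) h"
proof -
  have "(\<Sum>b\<in>Basis. frechet_derivative \<phi> (at x) b *\<^sub>R b) \<bullet> h = (\<Sum>b\<in>Basis. frechet_derivative \<phi> (at x) b * (b \<bullet> h))"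
    by (simp add: inner_sum_left)
  also have "\<dots> = (\<Sum>b\<in>Basis. (h \<bullet> b) * frechet_derivative \<phi> (at x) b)"
    by (rule sum.cong) (auto simp: inner_commute)
  also have "\<dots> = frechet_derivative \<phi> (at x) h" by (rule lin_expand[OF l, of h, symmetric])
  finally show ?thesis unfolding grad_def .
qed

lemma isc:
  fixes \<Omega> U :: "'a::euclidean_space set" and \<phi> :: "'a \<Rightarrow> real"
  assumes ldf: "local_defining_fun \<Omega> x0 U \<phi>" and xcl: "x0 \<in> closure \<Omega>"
  shows "\<exists>R0>0. \<forall>R. 0 < R \<and> R \<le> R0 \<longrightarrow>
           ball (x0 - R *\<^sub>R (grad \<phi> x0 /\<^sub>R norm (grad \<phi> x0))) R \<subseteq> \<Omega>"
proof -
  have U: "open U" "x0 \<in> U" and sm: "smooth_on U \<phi>" and gnz: "\<forall>y\<in>U. grad \<phi> y \<noteq> 0"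
    and OU: "\<Omega> \<inter> U = {y\<in>U. \<phi> y < 0}"
    using ldf unfolding local_defining_fun_def by auto
  have d0: "\<phi> differentiable (at x)" if "x \<in> U" for x
    using sm that unfolding smooth_on_def by (metis dirderiv.simps(1) empty_subsetI set_empty)
  have d1: "dirderiv [b] \<phi> differentiable (at x)" if "x \<in> U" "b \<in> Basis" for x b
    using sm that unfolding smooth_on_def by (metis empty_subsetI insert_subset list.set(1) list.set(2))
  have d2: "dirderiv [c, b] \<phi> differentiable (at x)" if "x \<in> U" "b \<in> Basis" "c \<in> Basis" for x b c
    using sm that unfolding smooth_on_def by (metis empty_subsetI insert_subset list.set(1) list.set(2))
  obtain \<rho> where \<rho>: "\<rho> > 0" "cball x0 \<rho> \<subseteq> U" using U open_contains_cball by blast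
  have contphi: "continuous_on U \<phi>"
    using d0 by (intro continuous_at_imp_continuous_on) (auto intro: differentiable_imp_continuous_within)
  have phi0: "\<phi> x0 \<le> 0"
  proof (rule ccontr)
    assume "\<not> \<phi> x0 \<le> 0"
    define V where "V = U \<inter> \<phi> -` {0<..}"
    have oV: "open V" unfolding V_def by (rule continuous_open_preimage[OF contphi U(1)]) auto
    have "V \<inter> \<Omega> = {}"
    proof (rule ccontr)
      assume "V \<inter> \<Omega> \<noteq> {}"
      then obtain x where x: "x \<in> V" "x \<in> \<Omega>" by blast
      then have "x \<in> \<Omega> \<inter> U" unfolding V_def by auto
      then have "\<phi> x < 0" using OU by auto
      then show False using x(1) unfolding V_def by auto
    qed
    then have "V \<inter> closure \<Omega> = {}" using open_Int_closure_eq_empty[OF oV] by simp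
    moreover have "x0 \<in> V" using \<open>\<not> \<phi> x0 \<le> 0\<close> U unfolding V_def by auto
    ultimately show False using xcl by auto
  qed
  define F where "F = (\<lambda>x. \<Sum>b\<in>Basis. \<Sum>c\<in>Basis. \<bar>dirderiv [c, b] \<phi> x\<bar>)"
  have "continuous_on (cball x0 \<rho>) F"
  proof -
    have "continuous_on (cball x0 \<rho>) (dirderiv [c, b] \<phi>)" if "b \<in> Basis" "c \<in> Basis" for b c
    proof (intro continuous_at_imp_continuous_on ballI)
      fix x assume "x \<in> cball x0 \<rho>"
      then have "x \<in> U" using \<rho>(2) by auto
      then have "dirderiv [c, b] \<phi> differentiable (at x)" using d2 that by blast
      then show "isCont (dirderiv [c, b] \<phi>) x" by (rule differentiable_imp_continuous_within)
    qed
    then show ?thesis unfolding F_def by (intro continuous_intros) auto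
  qed
  then obtain M where M: "\<And>x. x \<in> cball x0 \<rho> \<Longrightarrow> F x \<le> M"
    using continuous_attains_sup[OF compact_cball, of x0 \<rho> F] \<rho> by fastforce
  have M2: "(\<Sum>c\<in>Basis. \<bar>dirderiv [c, b] \<phi> x\<bar>) \<le> M" if "x \<in> cball x0 \<rho>" "b \<in> Basis" for x b
  proof -
    have "(\<Sum>c\<in>Basis. \<bar>dirderiv [c, b] \<phi> x\<bar>) \<le> F x"
      unfolding F_def by (rule member_le_sum[of b]) (use that in \<open>auto intro: sum_nonneg\<close>)
    then show ?thesis using M[OF that(1)] by simp
  qed
  have Mnn: "M \<ge> 0"
  proof -
    have "0 \<le> F x0" unfolding F_def by (intro sum_nonneg) auto
    then show ?thesis using M[of x0] \<rho> by auto
  qed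
  have lipb: "\<bar>dirderiv [b] \<phi> x - dirderiv [b] \<phi> x0\<bar> \<le> M * norm (x - x0)"
    if "x \<in> cball x0 \<rho>" "b \<in> Basis" for x b
  proof -
    have "norm (dirderiv [b] \<phi> x - dirderiv [b] \<phi> x0) \<le> M * norm (x - x0)"
    proof (rule differentiable_bound[OF convex_cball])
      fix w assume w: "w \<in> cball x0 \<rho>"
      show "(dirderiv [b] \<phi> has_derivative frechet_derivative (dirderiv [b] \<phi>) (at w)) (at w within cball x0 \<rho>)"
        using d1[of w b] w \<rho>(2) that(2) frechet_derivative_works has_derivative_at_withinI by blast
      have l: "linear (frechet_derivative (dirderiv [b] \<phi>) (at w))"
        using d1[of w b] w \<rho>(2) that(2) frechet_derivative_works has_derivative_linear by blast
      show "onorm (frechet_derivative (dirderiv [b] \<phi>) (at w)) \<le> M"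
      proof (rule onorm_le)
        fix h
        have "\<bar>frechet_derivative (dirderiv [b] \<phi>) (at w) h\<bar> \<le>
            (\<Sum>c\<in>Basis. \<bar>frechet_derivative (dirderiv [b] \<phi>) (at w) c\<bar>) * norm h"
          by (rule lin_bound[OF l])
        also have "\<dots> \<le> M * norm h"
          using M2[OF w that(2)] by (intro mult_right_mono) auto
        finally show "norm (frechet_derivative (dirderiv [b] \<phi>) (at w) h) \<le> M * norm h" by simp
      qed
    qed (use that \<rho> in auto)
    then show ?thesis by simp
  qed
  define L where "L = real DIM('a) * M"
  have Lnn: "L \<ge> 0" unfolding L_def using Mnn by simp
  define D where "D = (\<lambda>x. frechet_derivative \<phi> (at x))"
  have Dd: "(\<phi> has_derivative D x) (at x)" if "x \<in> U" for x
    unfolding D_def using d0[OF that] frechet_derivative_works by blast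
  have Dl: "linear (D x)" if "x \<in> U" for x using Dd[OF that] has_derivative_linear by blast
  have Dlip: "onorm (D x - D x0) \<le> L * norm (x - x0)" if xc: "x \<in> cball x0 \<rho>" for x
  proof (rule onorm_le)
    fix h
    have xU: "x \<in> U" using xc \<rho> by auto
    have l: "linear (\<lambda>h. D x h - D x0 h)" using Dl[OF xU] Dl[OF U(2)] by (rule linear_compose_sub)
    have "\<bar>D x h - D x0 h\<bar> \<le> (\<Sum>c\<in>Basis. \<bar>D x c - D x0 c\<bar>) * norm h"
      using lin_bound[OF l] by simp
    also have "\<dots> \<le> (\<Sum>c\<in>(Basis::'a set). M * norm (x - x0)) * norm h"
    proof (rule mult_right_mono)
      show "(\<Sum>c\<in>Basis. \<bar>D x c - D x0 c\<bar>) \<le> (\<Sum>c\<in>(Basis::'a set). M * norm (x - x0))"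
      proof (rule sum_mono)
        fix c :: 'a assume cB: "c \<in> Basis"
        show "\<bar>D x c - D x0 c\<bar> \<le> M * norm (x - x0)"
          using lipb[OF xc cB] unfolding D_def by simp
      qed
    qed simp
    also have "\<dots> = L * norm (x - x0) * norm h" unfolding L_def by simp
    finally show "norm ((D x - D x0) h) \<le> L * norm (x - x0) * norm h" by simp
  qed
  have taylor: "\<phi> y \<le> D x0 (y - x0) + L * (norm (y - x0))\<^sup>2" if y: "y \<in> cball x0 \<rho>" for y
  proof -
    define r where "r = norm (y - x0)"
    have rr: "r \<le> \<rho>" using y unfolding r_def by (simp add: dist_norm norm_minus_commute)
    have "norm (\<phi> y - \<phi> x0 - D x0 (y - x0)) \<le> norm (y - x0) * (L * r)"
    proof (rule differentiable_bound_linearization[where S = "cball x0 r"])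
      fix t :: real assume t: "t \<in> {0..1}"
      have "norm (x0 + t *\<^sub>R (y - x0) - x0) = t * r" using t unfolding r_def by simp
      also have "\<dots> \<le> r" using t unfolding r_def by (simp add: mult_left_le_one_le)
      finally show "x0 + t *\<^sub>R (y - x0) \<in> cball x0 r" by (simp add: dist_norm norm_minus_commute)
    next
      fix x assume x: "x \<in> cball x0 r"
      then have "x \<in> cball x0 \<rho>" using rr by auto
      then have "x \<in> U" using \<rho> by auto
      then show "(\<phi> has_derivative D x) (at x within cball x0 r)" using Dd has_derivative_at_withinI by blast
    next
      fix x assume x: "x \<in> cball x0 r"
      then have xr: "x \<in> cball x0 \<rho>" using rr by auto
      have "onorm (D x - D x0) \<le> L * norm (x - x0)" by (rule Dlip[OF xr])
      also have "\<dots> \<le> L * r" using x Lnn by (intro mult_left_mono) (auto simp: dist_norm norm_minus_commute)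
      finally show "onorm (D x - D x0) \<le> L * r" .
    qed (simp add: r_def)
    then have "\<phi> y - \<phi> x0 - D x0 (y - x0) \<le> L * r * r" unfolding r_def by (simp add: algebra_simps)
    then show ?thesis using phi0 unfolding r_def by (simp add: power2_eq_square algebra_simps)
  qed
  define g0 where "g0 = norm (grad \<phi> x0)"
  have g0: "g0 > 0" unfolding g0_def using gnz U by auto
  define \<nu> where "\<nu> = grad \<phi> x0 /\<^sub>R g0"
  have nu1: "\<nu> \<bullet> \<nu> = 1" unfolding \<nu>_def g0_def using g0 g0_def
    by (simp add: dot_square_norm divide_simps)
  have Dnu: "D x0 h = g0 * (\<nu> \<bullet> h)" for h
  proof -
    have "D x0 h = grad \<phi> x0 \<bullet> h" unfolding D_def by (rule grad_inner[symmetric]) (use Dl[OF U(2)] D_def in simp)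
    also have "grad \<phi> x0 = g0 *\<^sub>R \<nu>" unfolding \<nu>_def using g0 by simp
    finally show ?thesis by simp
  qed
  define R0 where "R0 = min (\<rho> / 2) (g0 / (2 * (L + 1)))"
  have R0: "R0 > 0" unfolding R0_def using \<rho> g0 Lnn by auto
  show ?thesis
  proof (intro exI[of _ R0] conjI allI impI R0)
    fix R assume R: "0 < R \<and> R \<le> R0"
    show "ball (x0 - R *\<^sub>R (grad \<phi> x0 /\<^sub>R norm (grad \<phi> x0))) R \<subseteq> \<Omega>"
    proof
      fix y assume "y \<in> ball (x0 - R *\<^sub>R (grad \<phi> x0 /\<^sub>R norm (grad \<phi> x0))) R"
      then have yb: "norm (y - x0 + R *\<^sub>R \<nu>) < R"
        unfolding \<nu>_def g0_def by (simp add: dist_norm norm_minus_commute algebra_simps)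
      define h where "h = y - x0"
      have "norm h \<le> norm (h + R *\<^sub>R \<nu>) + norm (R *\<^sub>R \<nu>)"
        by (metis add_diff_cancel norm_triangle_ineq4)
      moreover have "norm \<nu> = 1" unfolding \<nu>_def g0_def using g0 g0_def by simp
      ultimately have "norm h < 2 * R" using yb R unfolding h_def by simp
      moreover have "2 * R \<le> \<rho>" using R unfolding R0_def by simp
      ultimately have yc: "y \<in> cball x0 \<rho>" unfolding h_def by (simp add: dist_norm norm_minus_commute)
      have "(norm (h + R *\<^sub>R \<nu>))\<^sup>2 < R\<^sup>2" using yb unfolding h_def
        by (simp add: power_strict_mono)
      moreover have "(norm (h + R *\<^sub>R \<nu>))\<^sup>2 = h \<bullet> h + 2 * R * (\<nu> \<bullet> h) + R\<^sup>2"
      proof -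
        have "(norm (h + R *\<^sub>R \<nu>))\<^sup>2 = (h + R *\<^sub>R \<nu>) \<bullet> (h + R *\<^sub>R \<nu>)" by (rule power2_norm_eq_inner)
        also have "\<dots> = h \<bullet> h + 2 * R * (\<nu> \<bullet> h) + R\<^sup>2 * (\<nu> \<bullet> \<nu>)"
          by (simp add: inner_add_left inner_add_right inner_commute[of h \<nu>] power2_eq_square algebra_simps)
        finally show ?thesis using nu1 by simp
      qed
      ultimately have key: "2 * R * (\<nu> \<bullet> h) < - (h \<bullet> h)" by simp
      have hh: "h \<bullet> h \<ge> 0" by simp
      have "2 * R * (g0 * (\<nu> \<bullet> h)) = g0 * (2 * R * (\<nu> \<bullet> h))" by simp
      also have "\<dots> < g0 * (- (h \<bullet> h))" using key g0 by (intro mult_strict_left_mono) auto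
      also have "\<dots> \<le> (2 * R * (L + 1)) * (- (h \<bullet> h))"
      proof (rule mult_right_mono_neg)
        have "R \<le> g0 / (2 * (L + 1))" using R unfolding R0_def by simp
        then show "2 * R * (L + 1) \<le> g0" using Lnn by (simp add: field_simps)
      qed (use hh in simp)
      finally have "2 * R * (g0 * (\<nu> \<bullet> h)) < 2 * R * (- (L + 1) * (h \<bullet> h))" by (simp add: algebra_simps)
      then have "g0 * (\<nu> \<bullet> h) < - (L + 1) * (h \<bullet> h)" using R by simp
      moreover have "\<phi> y \<le> g0 * (\<nu> \<bullet> h) + L * (h \<bullet> h)"
        using taylor[OF yc] unfolding Dnu h_def by (simp add: power2_norm_eq_inner)
      ultimately have "\<phi> y < - (h \<bullet> h)" by (simp add: algebra_simps)
      then have "\<phi> y < 0" using hh by linarith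
      moreover have "y \<in> U" using yc \<rho> by auto
      ultimately show "y \<in> \<Omega>" using OU by auto
    qed
  qed
qed

lemma outward_normal_ex:
  fixes \<Omega> :: "'a::euclidean_space set"
  assumes sb: "smooth_boundary \<Omega>" and x0: "x0 \<in> frontier \<Omega>"
  shows "\<exists>U \<phi>. local_defining_fun \<Omega> x0 U \<phi> \<and> outward_normal \<Omega> x0 = grad \<phi> x0 /\<^sub>R norm (grad \<phi> x0)"
proof -
  obtain U \<phi> where "local_defining_fun \<Omega> x0 U \<phi>" using sb x0 unfolding smooth_boundary_def by blast
  then have "\<exists>n. \<exists>U \<phi>. local_defining_fun \<Omega> x0 U \<phi> \<and> n = grad \<phi> x0 /\<^sub>R norm (grad \<phi> x0)" by blast
  from someI_ex[OF this] show ?thesis unfolding outward_normal_def by blast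
qed

lemma tangent_ball:
  fixes \<Omega> :: "'a::euclidean_space set"
  assumes dom: "smooth_bounded_domain \<Omega>" and x0: "x0 \<in> frontier \<Omega>"
  shows "norm (outward_normal \<Omega> x0) = 1"
    and "\<exists>R0>0. \<forall>R. 0 < R \<and> R \<le> R0 \<longrightarrow> ball (x0 - R *\<^sub>R outward_normal \<Omega> x0) R \<subseteq> \<Omega>"
proof -
  have sb: "smooth_boundary \<Omega>" using dom unfolding smooth_bounded_domain_def by auto
  obtain U \<phi> where ldf: "local_defining_fun \<Omega> x0 U \<phi>"
    and on: "outward_normal \<Omega> x0 = grad \<phi> x0 /\<^sub>R norm (grad \<phi> x0)"
    using outward_normal_ex[OF sb x0] by blast
  have "grad \<phi> x0 \<noteq> 0" using ldf unfolding local_defining_fun_def by auto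
  then show "norm (outward_normal \<Omega> x0) = 1" unfolding on by simp
  have "x0 \<in> closure \<Omega>" using x0 unfolding frontier_def by auto
  from isc[OF ldf this] show "\<exists>R0>0. \<forall>R. 0 < R \<and> R \<le> R0 \<longrightarrow> ball (x0 - R *\<^sub>R outward_normal \<Omega> x0) R \<subseteq> \<Omega>"
    unfolding on .
qed

lemma boundary_hopf:
  fixes \<Omega> :: "'a::euclidean_space set" and u :: "'a \<Rightarrow> real"
  assumes dom: "smooth_bounded_domain \<Omega>" and x0: "x0 \<in> frontier \<Omega>"
    and cont: "continuous_on (closure \<Omega>) u" and tw: "tw \<Omega> u"
    and Dd: "(u has_derivative D) (at x0 within closure \<Omega>)"
    and Dn: "D (outward_normal \<Omega> x0) \<le> 0"
    and mx: "\<forall>x\<in>closure \<Omega>. u x \<le> u x0"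
    and r: "r > 0"
    and lt: "\<forall>x\<in>\<Omega> \<inter> ball x0 r. u x < u x0"
    and lap: "\<forall>x\<in>\<Omega> \<inter> ball x0 r. laplacian u x \<ge> 0"
  shows False
proof -
  define \<nu> where "\<nu> = outward_normal \<Omega> x0"
  have n1: "norm \<nu> = 1" unfolding \<nu>_def by (rule tangent_ball(1)[OF dom x0])
  obtain R0 where R0: "R0 > 0" "\<forall>R. 0 < R \<and> R \<le> R0 \<longrightarrow> ball (x0 - R *\<^sub>R \<nu>) R \<subseteq> \<Omega>"
    using tangent_ball(2)[OF dom x0] unfolding \<nu>_def by blast
  define R where "R = min R0 (r/2)"
  have R: "R > 0" "R \<le> R0" "2 * R \<le> r" unfolding R_def using R0 r by auto
  define z where "z = x0 - R *\<^sub>R \<nu>"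
  have bO: "ball z R \<subseteq> \<Omega>" using R0(2) R unfolding z_def by auto
  have cbO: "cball z R \<subseteq> closure \<Omega>"
    using closure_mono[OF bO] R by simp
  have bb: "ball z R \<subseteq> ball x0 r"
  proof
    fix w assume "w \<in> ball z R"
    then have "dist z w < R" by simp
    moreover have "dist x0 z = R" unfolding z_def using n1 R by (simp add: dist_norm)
    ultimately have "dist x0 w < 2 * R" using dist_triangle[of x0 w z] by simp
    then show "w \<in> ball x0 r" using R by simp
  qed
  have "D (x0 - z) > 0"
  proof (rule hopf[OF R(1)])
    show "dist z x0 = R" unfolding z_def using n1 R by (simp add: dist_norm)
    show "continuous_on (cball z R) u" by (rule continuous_on_subset[OF cont cbO])
    show "\<forall>x\<in>cball z R. u x \<le> u x0" using mx cbO by auto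
    show "\<forall>x\<in>ball z R. u x < u x0" using lt bO bb by auto
    show "tw (ball z R) u" by (rule tw_subset[OF tw bO])
    show "\<forall>x\<in>ball z R. 0 \<le> laplacian u x" using lap bO bb by auto
    show "(u has_derivative D) (at x0 within cball z R)" by (rule has_derivative_subset[OF Dd cbO])
  qed
  moreover have "D (x0 - z) = R * D \<nu>"
    unfolding z_def using linear_scale[OF has_derivative_linear[OF Dd]] by simp
  moreover have "R * D \<nu> \<le> 0" using R Dn unfolding \<nu>_def by (simp add: mult_nonneg_nonpos)
  ultimately show False by simp
qed

lemma neumann_const:
  fixes \<Omega> :: "'a::euclidean_space set" and u :: "'a \<Rightarrow> real"
  assumes dom: "smooth_bounded_domain \<Omega>"
    and cont: "continuous_on (closure \<Omega>) u" and tw: "tw \<Omega> u"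
    and lap: "\<forall>x\<in>\<Omega>. laplacian u x \<ge> 0"
    and bc: "\<forall>x\<in>frontier \<Omega>. \<exists>D. (u has_derivative D) (at x within closure \<Omega>) \<and> D (outward_normal \<Omega> x) \<le> 0"
  shows "\<exists>M. \<forall>x\<in>closure \<Omega>. u x = M"
proof -
  have O: "open \<Omega>" "connected \<Omega>" "\<Omega> \<noteq> {}" "bounded \<Omega>"
    using dom unfolding smooth_bounded_domain_def by auto
  have "compact (closure \<Omega>)" using O by simp
  moreover have "closure \<Omega> \<noteq> {}" using O by simp
  ultimately have "\<exists>x\<in>closure \<Omega>. \<forall>y\<in>closure \<Omega>. u y \<le> u x"
    using continuous_attains_sup[OF _ _ cont] by simp
  then obtain x0 where x0: "x0 \<in> closure \<Omega>" "\<forall>x\<in>closure \<Omega>. u x \<le> u x0"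
    by blast
  show ?thesis
  proof (cases "\<exists>x1\<in>\<Omega>. u x1 = u x0")
    case True
    then obtain x1 where x1: "x1 \<in> \<Omega>" "u x1 = u x0" by blast
    have eq: "\<forall>x\<in>\<Omega>. u x = u x0"
    proof (rule smp[OF O(1) O(2) tw _ lap _ x1])
      show "continuous_on \<Omega> u" by (rule continuous_on_subset[OF cont closure_subset])
      show "\<forall>x\<in>\<Omega>. u x \<le> u x0" using x0 closure_subset by auto
    qed
    have "closed {x \<in> closure \<Omega>. u x = u x0}"
      by (rule continuous_closed_preimage_constant[OF cont]) simp
    moreover have "\<Omega> \<subseteq> {x \<in> closure \<Omega>. u x = u x0}" using eq closure_subset by auto
    ultimately have "closure \<Omega> \<subseteq> {x \<in> closure \<Omega>. u x = u x0}" by (rule closure_minimal[rotated])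
    then show ?thesis by auto
  next
    case False
    have lt: "\<forall>x\<in>\<Omega>. u x < u x0"
    proof
      fix x assume x: "x \<in> \<Omega>"
      then have "u x \<le> u x0" using x0 closure_subset by blast
      moreover have "u x \<noteq> u x0" using False x by blast
      ultimately show "u x < u x0" by simp
    qed
    have "x0 \<notin> \<Omega>" using False by auto
    then have fx0: "x0 \<in> frontier \<Omega>" using x0(1) O(1) unfolding frontier_def by (simp add: interior_open)
    obtain D where D: "(u has_derivative D) (at x0 within closure \<Omega>)" "D (outward_normal \<Omega> x0) \<le> 0"
      using bc fx0 by blast
    have False
      by (rule boundary_hopf[OF dom fx0 cont tw D x0(2), of 1]) (use lt lap in simp_all)
    then show ?thesis ..
  qed
qed

lemma lou_ni:
  fixes \<Omega> :: "'a::euclidean_space set" and u :: "'a \<Rightarrow> real"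
  assumes dom: "smooth_bounded_domain \<Omega>"
    and cont: "continuous_on (closure \<Omega>) u" and tw: "tw \<Omega> u"
    and x0: "x0 \<in> closure \<Omega>" and mx: "\<forall>x\<in>closure \<Omega>. u x \<le> u x0"
    and bc: "x0 \<in> frontier \<Omega> \<Longrightarrow> \<exists>D. (u has_derivative D) (at x0 within closure \<Omega>) \<and> D (outward_normal \<Omega> x0) \<le> 0"
    and V: "open V" "x0 \<in> V" and lap: "\<forall>x\<in>V \<inter> \<Omega>. laplacian u x > 0"
  shows False
proof -
  have O: "open \<Omega>" using dom unfolding smooth_bounded_domain_def by auto
  have oVO: "open (V \<inter> \<Omega>)" using O V by auto
  have mx': "\<forall>w\<in>V \<inter> \<Omega>. u w \<le> u x" if "x \<in> V \<inter> \<Omega>" "u x = u x0" for x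
    using mx closure_subset that by auto
  have nomax: False if "x \<in> V \<inter> \<Omega>" "u x = u x0" for x
  proof -
    have "laplacian u x \<le> 0"
      by (rule sdt[OF oVO that(1)]) (use tw_subset[OF tw] mx'[OF that] in auto)
    then show False using lap that(1) by force
  qed
  show False
  proof (cases "x0 \<in> \<Omega>")
    case True
    then show False using nomax[of x0] V by auto
  next
    case False
    then have fx0: "x0 \<in> frontier \<Omega>" using x0 O unfolding frontier_def by (simp add: interior_open)
    obtain D where D: "(u has_derivative D) (at x0 within closure \<Omega>)" "D (outward_normal \<Omega> x0) \<le> 0"
      using bc fx0 by blast
    obtain r where r: "r > 0" "ball x0 r \<subseteq> V" using V open_contains_ball by blast
    show False
    proof (rule boundary_hopf[OF dom fx0 cont tw D mx r(1)])
      show "\<forall>x\<in>\<Omega> \<inter> ball x0 r. u x < u x0"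
      proof
        fix x assume x: "x \<in> \<Omega> \<inter> ball x0 r"
        then have "x \<in> V \<inter> \<Omega>" using r by auto
        moreover have "u x \<le> u x0" using mx x closure_subset by auto
        ultimately show "u x < u x0" using nomax[of x] by force
      qed
      show "\<forall>x\<in>\<Omega> \<inter> ball x0 r. 0 \<le> laplacian u x"
      proof
        fix x assume "x \<in> \<Omega> \<inter> ball x0 r"
        then have "x \<in> V \<inter> \<Omega>" using r by auto
        then show "0 \<le> laplacian u x" using lap less_imp_le by blast
      qed
    qed
  qed
qed

lemma holder_cont:
  fixes f :: "'a::euclidean_space \<Rightarrow> real"
  assumes "holder_continuous_on A f"
  shows "continuous_on A f"
proof -
  obtain \<alpha> C where a: "0 < \<alpha>" and H: "\<forall>x\<in>A. \<forall>y\<in>A. \<bar>f x - f y\<bar> \<le> C * dist x y powr \<alpha>"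
    using assms unfolding holder_continuous_on_def by blast
  show ?thesis unfolding continuous_on_iff
  proof (intro ballI allI impI)
    fix x e assume x: "x \<in> A" and e: "(e::real) > 0"
    define C' where "C' = \<bar>C\<bar> + 1"
    have C': "C' > 0" "C \<le> C'" unfolding C'_def by auto
    define d where "d = (e / C') powr (1 / \<alpha>)"
    have d: "d > 0" unfolding d_def using e C' by simp
    have dpow: "d powr \<alpha> = e / C'" unfolding d_def powr_powr using a e C' by simp
    show "\<exists>d>0. \<forall>x'\<in>A. dist x' x < d \<longrightarrow> dist (f x') (f x) < e"
    proof (intro exI[of _ d] conjI ballI impI d)
      fix x' assume x': "x' \<in> A" and dx: "dist x' x < d"
      have "dist x' x powr \<alpha> < d powr \<alpha>" by (rule powr_less_mono2[OF a _ dx]) simp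
      then have lt: "dist x' x powr \<alpha> < e / C'" using dpow by simp
      have "\<bar>f x' - f x\<bar> \<le> C * dist x' x powr \<alpha>" using H x x' by blast
      also have "\<dots> \<le> C' * dist x' x powr \<alpha>" using C' by (intro mult_right_mono) auto
      also have "\<dots> < C' * (e / C')" using lt C' by (intro mult_strict_left_mono) auto
      also have "\<dots> = e" using C' by simp
      finally show "dist (f x') (f x) < e" by (simp add: dist_real_def)
    qed
  qed
qed

lemma c1_cont:
  assumes "C1_closure \<Omega> u"
  shows "continuous_on (closure \<Omega>) u"
  using assms unfolding C1_closure_def continuous_on_eq_continuous_within
  by (auto intro: differentiable_imp_continuous_within)

theorem lemma5p2:
  fixes \<Omega> :: "'a::euclidean_space set"
    and \<beta> \<gamma> S I :: "'a \<Rightarrow> real"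
    and dS dI N p q Nstar :: real
  assumes dom: "smooth_bounded_domain \<Omega>"
    and beta_pos: "\<forall>x\<in>closure \<Omega>. 0 < \<beta> x"
    and gamma_pos: "\<forall>x\<in>closure \<Omega>. 0 < \<gamma> x"
    and beta_holder: "holder_continuous_on (closure \<Omega>) \<beta>"
    and gamma_holder: "holder_continuous_on (closure \<Omega>) \<gamma>"
    and N_pos: "0 < N" and q_pos: "0 < q" and p_pos: "0 < p" and p_lt1: "p < 1"
    and dS_pos: "0 < dS" and dI_pos: "0 < dI"
    and EE: "endemic_equilibrium \<Omega> dS dI N p q \<beta> \<gamma> S I"
    and Nstar_pos: "0 < Nstar"
    and Nstar_eq: "N / measure lebesgue \<Omega> =
        Nstar + (fmax \<Omega> (\<lambda>x. \<beta> x / \<gamma> x)) powr (1 / (1 - p)) * Nstar powr (q / (1 - p))"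
  shows "(\<forall>x\<in>closure \<Omega>. (dS * S x + dI * I x) / dS \<ge> Nstar) \<and>
         (dS \<ge> dI \<longrightarrow> (\<forall>x\<in>closure \<Omega>. (dS * S x + dI * I x) / dS \<le> N / measure lebesgue \<Omega>))"
proof -
  have O: "open \<Omega>" "connected \<Omega>" "\<Omega> \<noteq> {}" "bounded \<Omega>"
    using dom unfolding smooth_bounded_domain_def by auto
  have C2S: "C2_on \<Omega> S" and C2I: "C2_on \<Omega> I" and C1S: "C1_closure \<Omega> S" and C1I: "C1_closure \<Omega> I"
    and nn: "\<forall>x\<in>closure \<Omega>. 0 \<le> S x \<and> 0 \<le> I x"
    and pdeS: "\<forall>x\<in>\<Omega>. dS * laplacian S x - \<beta> x * S x powr q * I x powr p + \<gamma> x * I x = 0"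
    and pdeI: "\<forall>x\<in>\<Omega>. dI * laplacian I x + \<beta> x * S x powr q * I x powr p - \<gamma> x * I x = 0"
    and bc: "\<forall>x\<in>frontier \<Omega>. normal_deriv \<Omega> S x = 0 \<and> normal_deriv \<Omega> I x = 0"
    and intN: "((\<lambda>x. S x + I x) has_integral N) \<Omega>"
    using EE unfolding endemic_equilibrium_def by auto
  have twS: "tw \<Omega> S" and twI: "tw \<Omega> I" using C2S C2I by (auto intro: C2_on_tw)
  have contS: "continuous_on (closure \<Omega>) S" and contI: "continuous_on (closure \<Omega>) I"
    using C1S C1I by (auto intro: c1_cont)
  have Oc: "\<Omega> \<subseteq> closure \<Omega>" by (rule closure_subset)
  have fcl: "x \<in> closure \<Omega>" if "x \<in> frontier \<Omega>" for x using that unfolding frontier_def by auto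
  have derS: "(S has_derivative frechet_derivative S (at x within closure \<Omega>)) (at x within closure \<Omega>)"
    if "x \<in> closure \<Omega>" for x
    using C1S that unfolding C1_closure_def frechet_derivative_works[symmetric] by blast
  have derI: "(I has_derivative frechet_derivative I (at x within closure \<Omega>)) (at x within closure \<Omega>)"
    if "x \<in> closure \<Omega>" for x
    using C1I that unfolding C1_closure_def frechet_derivative_works[symmetric] by blast
  define w where "w = (\<lambda>x. dS * S x + dI * I x)"
  have tww: "tw \<Omega> w" unfolding w_def by (rule tw_comb(1)[OF O(1) twS twI])
  have lapw: "\<forall>x\<in>\<Omega>. laplacian w x \<ge> 0"
  proof
    fix x assume x: "x \<in> \<Omega>"
    have "laplacian w x = dS * laplacian S x + dI * laplacian I x"
      unfolding w_def by (rule tw_comb(2)[OF O(1) twS twI x])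
    also have "\<dots> = 0" using pdeS x pdeI by (simp add: algebra_simps) (smt (verit))
    finally show "laplacian w x \<ge> 0" by simp
  qed
  have contw: "continuous_on (closure \<Omega>) w" unfolding w_def using contS contI by (intro continuous_intros)
  have bcw: "\<forall>x\<in>frontier \<Omega>. \<exists>D. (w has_derivative D) (at x within closure \<Omega>) \<and> D (outward_normal \<Omega> x) \<le> 0"
  proof
    fix x assume x: "x \<in> frontier \<Omega>"
    define DS where "DS = frechet_derivative S (at x within closure \<Omega>)"
    define DI where "DI = frechet_derivative I (at x within closure \<Omega>)"
    have "(w has_derivative (\<lambda>h. dS * DS h + dI * DI h)) (at x within closure \<Omega>)"
      unfolding w_def DS_def DI_def
      by (intro has_derivative_add has_derivative_mult_right derS derI fcl x)
    moreover have "DS (outward_normal \<Omega> x) = 0" "DI (outward_normal \<Omega> x) = 0"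
      using bc x unfolding DS_def DI_def normal_deriv_def by auto
    ultimately show "\<exists>D. (w has_derivative D) (at x within closure \<Omega>) \<and> D (outward_normal \<Omega> x) \<le> 0"
      by auto
  qed
  obtain \<kappa> where \<kappa>: "\<forall>x\<in>closure \<Omega>. w x = \<kappa>"
    using neumann_const[OF dom contw tww lapw bcw] by blast
  define m where "m = \<kappa> / dS"
  obtain x1 where x1: "x1 \<in> \<Omega>" using O by auto
  have m0: "m \<ge> 0"
  proof -
    have "\<kappa> = w x1" using \<kappa> x1 Oc by auto
    also have "\<dots> \<ge> 0" unfolding w_def using nn x1 Oc dS_pos dI_pos by (auto intro!: add_nonneg_nonneg)
    finally show ?thesis unfolding m_def using dS_pos by simp
  qed
  have Sle: "S x \<le> m" if "x \<in> closure \<Omega>" for x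
  proof -
    have "dS * S x + dI * I x = \<kappa>" using \<kappa> that unfolding w_def by auto
    moreover have "dI * I x \<ge> 0" using nn that dI_pos by simp
    ultimately have "dS * S x \<le> \<kappa>" by linarith
    then show ?thesis unfolding m_def using dS_pos by (simp add: field_simps)
  qed
  have wm: "(dS * S x + dI * I x) / dS = m" if "x \<in> closure \<Omega>" for x
    using \<kappa> that unfolding w_def m_def by auto
  define mu where "mu = measure lebesgue \<Omega>"
  have lm: "\<Omega> \<in> lmeasurable" by (rule lmeasurable_open[OF O(4) O(1)])
  have one: "((\<lambda>x. 1) has_integral mu) \<Omega>"
    unfolding mu_def lmeasure_integral[OF lm] by (rule integrable_integral[OF integrable_on_const[OF lm]])
  have cint: "((\<lambda>x. c) has_integral c * mu) \<Omega>" for c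
    using has_integral_cmul[OF one, of c] by simp
  have "compact (closure \<Omega>)" using O by simp
  moreover have "closure \<Omega> \<noteq> {}" using O by simp
  ultimately have "\<exists>x\<in>closure \<Omega>. \<forall>y\<in>closure \<Omega>. I y \<le> I x"
    using continuous_attains_sup[OF _ _ contI] by simp
  then obtain x0 where x0: "x0 \<in> closure \<Omega>" "\<forall>y\<in>closure \<Omega>. I y \<le> I x0" by blast
  define F where "F = fmax \<Omega> (\<lambda>x. \<beta> x / \<gamma> x)"
  define B where "B = F powr (1 / (1 - p)) * m powr (q / (1 - p))"
  have B0: "B \<ge> 0" unfolding B_def by simp
  have Ib: "I x0 \<le> B"
  proof (rule ccontr)
    assume "\<not> I x0 \<le> B"
    then have BI: "B < I x0" by simp
    then have Ipos: "I x0 > 0" using B0 by simp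
    define r where "r = (\<lambda>x. \<beta> x / \<gamma> x)"
    have contb: "continuous_on (closure \<Omega>) \<beta>" by (rule holder_cont[OF beta_holder])
    have contg: "continuous_on (closure \<Omega>) \<gamma>" by (rule holder_cont[OF gamma_holder])
    have contr: "continuous_on (closure \<Omega>) r"
      unfolding r_def using contb contg gamma_pos by (intro continuous_intros) auto
    have "bdd_above (r ` closure \<Omega>)"
      by (rule bounded_imp_bdd_above, rule compact_imp_bounded, rule compact_continuous_image[OF contr])
        (use O in simp)
    then have rF: "r x0 \<le> F" unfolding F_def fmax_def r_def[symmetric]
      using x0(1) by (intro cSup_upper) auto
    have g0: "\<gamma> x0 > 0" and b0: "\<beta> x0 > 0" using gamma_pos beta_pos x0(1) by auto
    have r0: "r x0 > 0" unfolding r_def using g0 b0 by simp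
    have F0: "F > 0" using rF r0 by simp
    define Fm where "Fm = F * m powr q"
    have Fm0: "Fm \<ge> 0" unfolding Fm_def using F0 by simp
    have BFm: "B = Fm powr (1 / (1 - p))"
      unfolding B_def Fm_def powr_mult powr_powr by simp
    have "Fm = B powr (1 - p)"
      unfolding BFm powr_powr using p_lt1 Fm0 by (simp add: powr_one)
    also have "\<dots> < I x0 powr (1 - p)" by (rule powr_less_mono2) (use p_lt1 B0 BI in auto)
    finally have FmI: "Fm < I x0 powr (1 - p)" .
    have Isplit: "I x0 = I x0 powr p * I x0 powr (1 - p)"
      using Ipos by (simp add: powr_add[symmetric] powr_one)
    have S0: "0 \<le> S x0" "S x0 \<le> m" using nn x0(1) Sle[OF x0(1)] by auto
    have Sq: "S x0 powr q \<le> m powr q" by (rule powr_mono2) (use q_pos S0 in auto)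
    have bF: "\<beta> x0 \<le> F * \<gamma> x0" using rF g0 unfolding r_def by (simp add: divide_le_eq)
    have "\<beta> x0 * S x0 powr q \<le> (F * \<gamma> x0) * m powr q"
      by (rule mult_mono[OF bF Sq]) (use F0 g0 in auto)
    also have "\<dots> = \<gamma> x0 * Fm" unfolding Fm_def by simp
    finally have bS: "\<beta> x0 * S x0 powr q \<le> \<gamma> x0 * Fm" .
    have Ip: "I x0 powr p > 0" using Ipos by simp
    have "\<beta> x0 * S x0 powr q * I x0 powr p \<le> \<gamma> x0 * Fm * I x0 powr p"
      by (rule mult_right_mono[OF bS]) (use Ip in simp)
    also have "\<dots> < \<gamma> x0 * I x0 powr (1 - p) * I x0 powr p"
      using FmI g0 Ip by (intro mult_strict_right_mono mult_strict_left_mono) auto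
    also have "\<dots> = \<gamma> x0 * I x0" using Isplit by (simp add: mult_ac)
    finally have gneg: "\<beta> x0 * S x0 powr q * I x0 powr p - \<gamma> x0 * I x0 < 0" by simp
    define g where "g = (\<lambda>x. \<beta> x * S x powr q * I x powr p - \<gamma> x * I x)"
    have contg': "continuous_on (closure \<Omega>) g"
    proof -
      have cS: "continuous_on (closure \<Omega>) (\<lambda>x. S x powr q)"
        by (rule continuous_on_powr'[OF contS continuous_on_const]) (use nn q_pos in auto)
      have cI: "continuous_on (closure \<Omega>) (\<lambda>x. I x powr p)"
        by (rule continuous_on_powr'[OF contI continuous_on_const]) (use nn p_pos in auto)
      show ?thesis unfolding g_def by (intro continuous_on_diff continuous_on_mult cS cI contb contg contI)
    qed
    obtain V where V: "open V" "V \<inter> closure \<Omega> = g -` {..<0} \<inter> closure \<Omega>"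
      using contg' unfolding continuous_on_open_invariant by (meson open_lessThan)
    have x0V: "x0 \<in> V" using V(2) x0(1) gneg unfolding g_def by blast
    have lapI: "\<forall>x\<in>V \<inter> \<Omega>. laplacian I x > 0"
    proof
      fix x assume x: "x \<in> V \<inter> \<Omega>"
      then have "g x < 0" using V(2) Oc by blast
      moreover have "dI * laplacian I x + g x = 0" using pdeI x unfolding g_def by (simp add: algebra_simps)
      ultimately have "dI * laplacian I x > 0" by linarith
      then show "laplacian I x > 0" using dI_pos by (simp add: zero_less_mult_iff)
    qed
    show False
    proof (rule lou_ni[OF dom contI twI x0(1) x0(2) _ V(1) x0V lapI])
      assume fx: "x0 \<in> frontier \<Omega>"
      show "\<exists>D. (I has_derivative D) (at x0 within closure \<Omega>) \<and> D (outward_normal \<Omega> x0) \<le> 0"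
        using derI[OF x0(1)] bc fx unfolding normal_deriv_def by auto
    qed
  qed
  have SI: "S x + I x \<le> m + B" if "x \<in> \<Omega>" for x
    using Sle[of x] x0(2) Ib that Oc by force
  have "N \<le> (m + B) * mu"
    by (rule has_integral_le[OF intN cint]) (use SI in auto)
  then have mu: "mu > 0"
  proof -
    have "mu \<ge> 0" unfolding mu_def by (rule measure_nonneg)
    moreover have "mu \<noteq> 0" using \<open>N \<le> (m + B) * mu\<close> N_pos by auto
    ultimately show ?thesis by simp
  qed
  have NB: "N / mu \<le> m + B" using \<open>N \<le> (m + B) * mu\<close> mu by (simp add: divide_le_eq)
  have Nm: "Nstar \<le> m"
  proof (rule ccontr)
    assume "\<not> Nstar \<le> m"
    then have lt: "m < Nstar" by simp
    have "m powr (q / (1 - p)) \<le> Nstar powr (q / (1 - p))"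
      by (rule powr_mono2) (use q_pos p_lt1 m0 lt in auto)
    then have "B \<le> F powr (1 / (1 - p)) * Nstar powr (q / (1 - p))"
      unfolding B_def by (intro mult_left_mono) auto
    then have "m + B < N / mu" using lt Nstar_eq unfolding F_def mu_def by linarith
    then show False using NB by simp
  qed
  show ?thesis
  proof (intro conjI impI ballI)
    fix x assume "x \<in> closure \<Omega>"
    then show "(dS * S x + dI * I x) / dS \<ge> Nstar" using wm Nm by simp
  next
    fix x assume dd: "dS \<ge> dI" and x: "x \<in> closure \<Omega>"
    have le: "m \<le> S y + I y" if "y \<in> \<Omega>" for y
    proof -
      have y: "y \<in> closure \<Omega>" using that Oc by auto
      have "dI * I y \<le> dS * I y" using dd nn y by (intro mult_right_mono) auto
      then have "dS * S y + dI * I y \<le> dS * (S y + I y)" by (simp add: algebra_simps)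
      then have "(dS * S y + dI * I y) / dS \<le> S y + I y" using dS_pos by (simp add: divide_le_eq mult.commute)
      then show ?thesis using wm[OF y] by simp
    qed
    have "m * mu \<le> N" by (rule has_integral_le[OF cint intN]) (use le in auto)
    then have "m \<le> N / mu" using mu by (simp add: le_divide_eq)
    then show "(dS * S x + dI * I x) / dS \<le> N / measure lebesgue \<Omega>" using wm[OF x] unfolding mu_def by simp
  qed
qed

end
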